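(* Let $R=\mathbb{Z}_4+u\mathbb{Z}_4$ with $u^2=0$, let $n$ be odd, and define $\overline{\mu}:R^n\to R^n$ by $$\overline{\mu}(c_0,c_1,\dots,c_{n-1})=(c_0,(1+2u)c_1,(1+2u)^2c_2,\dots,(1+2u)^{n-1}c_{n-1}).$$ Then $C\subseteq R^n$ is a linear cyclic code over $R$ of length $n$ if and only if $\overline{\mu}(C)$ is a linear $(1+2u)$-constacyclic code of length $n$ over $R$.
   Context: A linear code of length $n$ over $R$ is an $R$-submodule of $R^n$. It is cyclic if invariant under $\sigma(c_0,\dots,c_{n-1})=(c_{n-1},c_0,\dots,c_{n-2})$, and $(1+2u)$-constacyclic if invariant under $\tau(c_0,\dots,c_{n-1})=((1+2u)c_{n-1},c_0,\dots,c_{n-2})$. *)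

theory Defs
  imports Main "HOL-Library.Numeral_Type"
begin

text \<open>The ring R = Z4 + u Z4 with u^2 = 0: the pair (a, b) represents a + u b,
  with a, b in Z4 (the library type 4 of integers mod 4).\<close>

type_synonym R = "4 \<times> 4"

definition R_add :: "R \<Rightarrow> R \<Rightarrow> R" where
  "R_add x y = (fst x + fst y, snd x + snd y)"

definition R_mult :: "R \<Rightarrow> R \<Rightarrow> R" where
  "R_mult x y = (fst x * fst y, fst x * snd y + snd x * fst y)"

definition R_zero :: R where "R_zero = (0, 0)"
definition R_one :: R where "R_one = (1, 0)"

definition lam :: R where "lam = (1, 2)"

fun R_pow :: "R \<Rightarrow> nat \<Rightarrow> R" where
  "R_pow x 0 = R_one"
| "R_pow x (Suc k) = R_mult x (R_pow x k)"

text \<open>Words of R^n are lists of length n.\<close>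
definition vadd :: "R list \<Rightarrow> R list \<Rightarrow> R list" where
  "vadd c d = map2 R_add c d"

definition smult :: "R \<Rightarrow> R list \<Rightarrow> R list" where
  "smult r c = map (R_mult r) c"

definition linear_code :: "nat \<Rightarrow> R list set \<Rightarrow> bool" where
  "linear_code n C \<longleftrightarrow> C \<subseteq> {c. length c = n} \<and> C \<noteq> {} \<and>
     (\<forall>c\<in>C. \<forall>d\<in>C. vadd c d \<in> C) \<and> (\<forall>r. \<forall>c\<in>C. smult r c \<in> C)"

definition cyc_shift :: "R list \<Rightarrow> R list" where
  "cyc_shift c = last c # butlast c"

definition consta_shift :: "R list \<Rightarrow> R list" where
  "consta_shift c = R_mult lam (last c) # butlast c"

definition cyclic :: "R list set \<Rightarrow> bool" where
  "cyclic C \<longleftrightarrow> (\<forall>c\<in>C. cyc_shift c \<in> C)"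

definition constacyclic :: "R list set \<Rightarrow> bool" where
  "constacyclic C \<longleftrightarrow> (\<forall>c\<in>C. consta_shift c \<in> C)"

definition mu_bar :: "R list \<Rightarrow> R list" where
  "mu_bar c = map (\<lambda>i. R_mult (R_pow lam i) (c ! i)) [0..<length c]"

end

theory Submission
  imports Defs
begin

lemma lam_lam: "R_mult lam lam = R_one"
  by (simp add: R_mult_def lam_def R_one_def)

lemma R_one_mult[simp]: "R_mult R_one x = x"
  by (simp add: R_mult_def R_one_def)

lemma R_mult_one[simp]: "R_mult x R_one = x"
  by (simp add: R_mult_def R_one_def)

lemma R_mult_lc: "R_mult p (R_mult r x) = R_mult r (R_mult p x)"
  by (simp add: R_mult_def algebra_simps)

lemma R_mult_assoc: "R_mult p (R_mult r x) = R_mult (R_mult p r) x"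
  by (simp add: R_mult_def algebra_simps)

lemma R_mult_add: "R_mult p (R_add x y) = R_add (R_mult p x) (R_mult p y)"
  by (simp add: R_mult_def R_add_def algebra_simps)

lemma lam_lam_x: "R_mult lam (R_mult lam x) = x"
  by (simp add: R_mult_assoc lam_lam)

lemma pow_lam: "R_pow lam i = (if even i then R_one else lam)"
  by (induction i) (auto simp: lam_lam)

lemma mu_len[simp]: "length (mu_bar c) = length c"
  by (simp add: mu_bar_def)

lemma mu_nth[simp]: "i < length c \<Longrightarrow> mu_bar c ! i = R_mult (R_pow lam i) (c ! i)"
  by (simp add: mu_bar_def)

lemma mu_mu[simp]: "mu_bar (mu_bar c) = c"
  by (rule nth_equalityI) (auto simp: pow_lam lam_lam_x)

lemma mu_vadd: "length c = length d \<Longrightarrow> mu_bar (vadd c d) = vadd (mu_bar c) (mu_bar d)"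
  by (rule nth_equalityI) (auto simp: vadd_def R_mult_add)

lemma mu_smult: "mu_bar (smult r c) = smult r (mu_bar c)"
  by (rule nth_equalityI) (auto simp: smult_def R_mult_lc)

lemma len_cyc[simp]: "c \<noteq> [] \<Longrightarrow> length (cyc_shift c) = length c"
  by (cases c rule: rev_cases) (auto simp: cyc_shift_def)

lemma len_smult[simp]: "length (smult r c) = length c"
  by (simp add: smult_def)

lemma key:
  assumes "odd (length c)"
  shows "consta_shift (mu_bar c) = smult lam (mu_bar (cyc_shift c))"
proof -
  obtain b x where c: "c = b @ [x]" using assms by (cases c rule: rev_cases) auto
  have eb: "even (length b)" using assms c by simp
  show ?thesis
  proof (rule nth_equalityI)
    show "length (consta_shift (mu_bar c)) = length (smult lam (mu_bar (cyc_shift c)))"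
      by (simp add: consta_shift_def c)
  next
    fix i assume i: "i < length (consta_shift (mu_bar c))"
    hence il: "i < Suc (length b)" by (simp add: consta_shift_def c)
    have lastmu: "last (mu_bar (b @ [x])) = R_mult (R_pow lam (length b)) x"
      using last_conv_nth[of "mu_bar (b@[x])"] by (simp add: nth_append del: mu_nth)
        (simp add: mu_bar_def)
    show "consta_shift (mu_bar c) ! i = smult lam (mu_bar (cyc_shift c)) ! i"
    proof (cases i)
      case 0
      then show ?thesis using eb
        by (simp add: consta_shift_def lastmu pow_lam smult_def cyc_shift_def c)
    next
      case (Suc j)
      have bm: "butlast (mu_bar c) ! j = mu_bar c ! j"
        using il Suc c by (simp add: nth_butlast)
      have cs: "cyc_shift c ! i = b ! j" using Suc by (simp add: cyc_shift_def c)
      show ?thesis using il Suc bm cs c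
        by (simp add: consta_shift_def smult_def nth_append pow_lam lam_lam_x lam_lam)
    qed
  qed
qed

theorem corollary4p7:
  fixes n :: nat and C :: "R list set"
  assumes "odd n"
    and "C \<subseteq> {c. length c = n}"
  shows "(linear_code n C \<and> cyclic C) \<longleftrightarrow>
         (linear_code n (mu_bar ` C) \<and> constacyclic (mu_bar ` C))"
proof
  assume h: "linear_code n C \<and> cyclic C"
  have L: "c \<in> C \<Longrightarrow> length c = n" for c using assms(2) by auto
  show "linear_code n (mu_bar ` C) \<and> constacyclic (mu_bar ` C)"
    unfolding linear_code_def constacyclic_def
  proof (intro conjI ballI allI)
    show "mu_bar ` C \<subseteq> {c. length c = n}" using L by auto
    show "mu_bar ` C \<noteq> {}" using h by (auto simp: linear_code_def)
  next
    fix c d assume "c \<in> mu_bar ` C" "d \<in> mu_bar ` C"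
    then obtain c' d' where "c' \<in> C" "d' \<in> C" "c = mu_bar c'" "d = mu_bar d'" by auto
    thus "vadd c d \<in> mu_bar ` C" using h L mu_vadd[of c' d']
      by (auto simp: linear_code_def intro!: image_eqI[where x="vadd c' d'"])
  next
    fix r c assume "c \<in> mu_bar ` C"
    then obtain c' where "c' \<in> C" "c = mu_bar c'" by auto
    moreover have "smult r c' \<in> C" using h \<open>c' \<in> C\<close> unfolding linear_code_def by blast
    ultimately show "smult r c \<in> mu_bar ` C" using mu_smult[of r c'] by (metis image_eqI)
  next
    fix c assume "c \<in> mu_bar ` C"
    then obtain c' where c': "c' \<in> C" "c = mu_bar c'" by auto
    have "cyc_shift c' \<in> C" using h c' by (auto simp: cyclic_def)
    hence "smult lam (cyc_shift c') \<in> C" using h unfolding linear_code_def by blast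
    moreover have "consta_shift c = mu_bar (smult lam (cyc_shift c'))"
      using c' L assms(1) key[of c'] by (simp add: mu_smult)
    ultimately show "consta_shift c \<in> mu_bar ` C" by auto
  qed
next
  assume h: "linear_code n (mu_bar ` C) \<and> constacyclic (mu_bar ` C)"
  have L: "c \<in> C \<Longrightarrow> length c = n" for c using assms(2) by auto
  have backC: "mu_bar x \<in> mu_bar ` C \<Longrightarrow> x \<in> C" for x
    by (metis image_iff mu_mu)
  have hv: "\<forall>c\<in>mu_bar ` C. \<forall>d\<in>mu_bar ` C. vadd c d \<in> mu_bar ` C"
    and hs: "\<And>r. \<forall>c\<in>mu_bar ` C. smult r c \<in> mu_bar ` C"
    and hne: "mu_bar ` C \<noteq> {}"
    and hc: "\<forall>c\<in>mu_bar ` C. consta_shift c \<in> mu_bar ` C"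
    using h unfolding linear_code_def constacyclic_def by blast+
  show "linear_code n C \<and> cyclic C"
    unfolding linear_code_def cyclic_def
  proof (intro conjI ballI allI)
    show "C \<subseteq> {c. length c = n}" using assms(2) .
    show "C \<noteq> {}" using hne by blast
  next
    fix c d assume cd: "c \<in> C" "d \<in> C"
    hence "vadd (mu_bar c) (mu_bar d) \<in> mu_bar ` C" using hv by blast
    moreover have "vadd (mu_bar c) (mu_bar d) = mu_bar (vadd c d)"
      using cd L mu_vadd[of c d] by simp
    ultimately show "vadd c d \<in> C" using backC by metis
  next
    fix r c assume cd: "c \<in> C"
    hence "smult r (mu_bar c) \<in> mu_bar ` C" using hs by blast
    thus "smult r c \<in> C" using mu_smult[of r c] backC by metis
  next
    fix c assume c: "c \<in> C"
    hence "consta_shift (mu_bar c) \<in> mu_bar ` C" using hc by blast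
    hence "smult lam (consta_shift (mu_bar c)) \<in> mu_bar ` C" using hs by blast
    moreover have "smult lam (consta_shift (mu_bar c)) = mu_bar (cyc_shift c)"
      using key[of c] c L[OF c] assms(1) by (simp add: smult_def comp_def lam_lam_x)
    ultimately show "cyc_shift c \<in> C" using backC by metis
  qed
qed

end
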